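(* Let $(Z, S(1), S(0), Y(1), Y(0), \mathbf{X})$ be random variables with $Z\in\{0,1\}$, $S(z)\in\{0,1\}$, $Y(z)$ real-valued, $\mathbf{X}$ a covariate vector, observed $S=S(Z)$, $Y=Y(Z)$, and assume Randomization: $Z \perp\!\!\!\perp \{S(1),S(0),Y(1),Y(0),\mathbf{X}\}$ (no monotonicity is assumed). Assume General Principal Ignorability, i.e. $Y(z)\perp\!\!\!\perp U\mid \mathbf{X}$ for $z=0,1$, and suppose $\xi = \Pr(U=\bar{s}s\mid\mathbf{X})/\Pr(U=s\bar{s}\mid\mathbf{X})$ is a fixed constant. Then for each stratum $u\in\{ss,s\bar{s},\bar{s}s,\bar{s}\bar{s}\}$, writing $u=(s(1),s(0))$, $$ACE_u = E\{w_{1,u}(\mathbf{X})Y\mid Z=1,S=s(1)\} - E\{w_{0,u}(\mathbf{X})Y\mid Z=0,S=s(0)\},$$ where for $z\in\{0,1\}$, letting $\mathcal{U}_z(u)=\{u' : u' \text{ has the same value of } S(z) \text{ as } u\}$ (the two strata that are mixed in the observed group $(Z=z,S=s(z))$), $$w_{z,u}(\mathbf{X}) = \frac{e_u(\mathbf{X})}{\sum_{u'\in\mathcal{U}_z(u)} e_{u'}(\mathbf{X})}\Big/\frac{\pi_u}{\sum_{u'\in\mathcal{U}_z(u)}\pi_{u'}}.$$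
   Context: The principal stratum is $U=(S(1),S(0))$, whose values $(1,1),(1,0),(0,1),(0,0)$ are labelled $ss, s\bar{s}, \bar{s}s, \bar{s}\bar{s}$. Principal scores: $e_u(\mathbf{X}) = \Pr(U=u\mid \mathbf{X})$; proportions $\pi_u=\Pr(U=u)$. Principal causal effects: $ACE_u = E\{Y(1)-Y(0)\mid U=u\}$. All expectations are assumed to exist and all conditioning events and denominators to be positive. *)

theory Defs
  imports "HOL-Probability.Probability"
begin

definition sigX :: "'a measure \<Rightarrow> 'b measure \<Rightarrow> ('a \<Rightarrow> 'b) \<Rightarrow> 'a measure" where
  "sigX M N X = vimage_algebra (space M) X N"

definition cprobX :: "'a measure \<Rightarrow> 'b measure \<Rightarrow> ('a \<Rightarrow> 'b) \<Rightarrow> ('a \<Rightarrow> 'c) \<Rightarrow> 'c \<Rightarrow> 'a \<Rightarrow> real" where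
  "cprobX M N X V v = real_cond_exp M (sigX M N X) (indicator {\<omega>\<in>space M. V \<omega> = v})"

definition cond_indep_var :: "'a measure \<Rightarrow> 'c measure \<Rightarrow> ('a \<Rightarrow> 'c) \<Rightarrow> 'd measure \<Rightarrow> ('a \<Rightarrow> 'd)
    \<Rightarrow> 'b measure \<Rightarrow> ('a \<Rightarrow> 'b) \<Rightarrow> bool" where
  "cond_indep_var M MA A MB B N X \<longleftrightarrow>
     (\<forall>SA\<in>sets MA. \<forall>SB\<in>sets MB. AE \<omega> in M.
        real_cond_exp M (sigX M N X)
          (\<lambda>t. indicator (A -` SA \<inter> space M) t * indicator (B -` SB \<inter> space M) t) \<omega>
        = real_cond_exp M (sigX M N X) (indicator (A -` SA \<inter> space M)) \<omega>
          * real_cond_exp M (sigX M N X) (indicator (B -` SB \<inter> space M)) \<omega>)"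

text \<open>Independence of two random variables of possibly different types
  (the library's indep_var requires equal codomain types): the generated sigma-algebras are independent.\<close>
definition indep_rv :: "'a measure \<Rightarrow> 'c measure \<Rightarrow> ('a \<Rightarrow> 'c) \<Rightarrow> 'd measure \<Rightarrow> ('a \<Rightarrow> 'd) \<Rightarrow> bool" where
  "indep_rv M MA A MB B \<longleftrightarrow>
     prob_space.indep_set M {A -` SA \<inter> space M | SA. SA \<in> sets MA} {B -` SB \<inter> space M | SB. SB \<in> sets MB}"

definition cond_expect_event :: "'a measure \<Rightarrow> ('a \<Rightarrow> real) \<Rightarrow> 'a set \<Rightarrow> real" where
  "cond_expect_event M f A = (\<integral>\<omega>. f \<omega> * indicator A \<omega> \<partial>M) / measure M A"

text \<open>Principal stratum U = (S(1), S(0)); True encodes the value 1.\<close>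
definition stratum :: "('a \<Rightarrow> bool) \<Rightarrow> ('a \<Rightarrow> bool) \<Rightarrow> 'a \<Rightarrow> bool \<times> bool" where
  "stratum S1 S0 \<omega> = (S1 \<omega>, S0 \<omega>)"

definition pscore :: "'a measure \<Rightarrow> 'b measure \<Rightarrow> ('a \<Rightarrow> 'b) \<Rightarrow> ('a \<Rightarrow> bool) \<Rightarrow> ('a \<Rightarrow> bool)
    \<Rightarrow> bool \<times> bool \<Rightarrow> 'a \<Rightarrow> real" where
  "pscore M N X S1 S0 u = cprobX M N X (stratum S1 S0) u"

definition pprop :: "'a measure \<Rightarrow> ('a \<Rightarrow> bool) \<Rightarrow> ('a \<Rightarrow> bool) \<Rightarrow> bool \<times> bool \<Rightarrow> real" where
  "pprop M S1 S0 u = measure M {\<omega>\<in>space M. stratum S1 S0 \<omega> = u}"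

text \<open>S(z) component of a stratum: z = True selects S(1) (first), z = False selects S(0).\<close>
definition scomp :: "bool \<Rightarrow> bool \<times> bool \<Rightarrow> bool" where
  "scomp z u = (if z then fst u else snd u)"

definition Ustr :: "bool \<Rightarrow> bool \<times> bool \<Rightarrow> (bool \<times> bool) set" where
  "Ustr z u = {u'. scomp z u' = scomp z u}"

definition weight :: "'a measure \<Rightarrow> 'b measure \<Rightarrow> ('a \<Rightarrow> 'b) \<Rightarrow> ('a \<Rightarrow> bool) \<Rightarrow> ('a \<Rightarrow> bool)
    \<Rightarrow> bool \<Rightarrow> bool \<times> bool \<Rightarrow> 'a \<Rightarrow> real" where
  "weight M N X S1 S0 z u \<omega> =
     (pscore M N X S1 S0 u \<omega> / (\<Sum>u'\<in>Ustr z u. pscore M N X S1 S0 u' \<omega>))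
     / (pprop M S1 S0 u / (\<Sum>u'\<in>Ustr z u. pprop M S1 S0 u'))"

definition ACE :: "'a measure \<Rightarrow> ('a \<Rightarrow> bool) \<Rightarrow> ('a \<Rightarrow> bool) \<Rightarrow> ('a \<Rightarrow> real) \<Rightarrow> ('a \<Rightarrow> real)
    \<Rightarrow> bool \<times> bool \<Rightarrow> real" where
  "ACE M S1 S0 Y1 Y0 u =
     cond_expect_event M (\<lambda>\<omega>. Y1 \<omega> - Y0 \<omega>) {\<omega>\<in>space M. stratum S1 S0 \<omega> = u}"

end

theory Submission
  imports Defs
begin


lemma ext_lemma:
  fixes M :: "'a measure" and Y D :: "'a \<Rightarrow> real"
  assumes "prob_space M" and Ym[measurable]: "Y \<in> borel_measurable M" and Yi: "integrable M Y"
    and Dm[measurable]: "D \<in> borel_measurable M" and K0: "0 \<le> K" and Db: "AE x in M. \<bar>D x\<bar> \<le> K"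
    and H: "\<And>SA. SA \<in> sets borel \<Longrightarrow> (\<integral>\<omega>. indicator (Y -` SA \<inter> space M) \<omega> * D \<omega> \<partial>M) = 0"
  shows "(\<integral>\<omega>. Y \<omega> * D \<omega> \<partial>M) = 0"
proof -
  interpret prob_space M by fact
  define Dp where "Dp = (\<lambda>x. max (D x) 0)"
  define Dn where "Dn = (\<lambda>x. max (- D x) 0)"
  have [measurable]: "Dp \<in> borel_measurable M" "Dn \<in> borel_measurable M" unfolding Dp_def Dn_def by auto
  have bp: "AE x in M. norm (Dp x) \<le> K" and bn: "AE x in M. norm (Dn x) \<le> K"
    using Db K0 unfolding Dp_def Dn_def by (auto elim!: eventually_mono)
  have ip: "integrable M (\<lambda>x. Y x * Dp x)"
    by (rule Bochner_Integration.integrable_bound[where f="\<lambda>x. K * Y x"]) (use Yi bp in \<open>auto elim!: eventually_mono simp: abs_mult mult.commute intro!: mult_right_mono\<close>)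
  have in': "integrable M (\<lambda>x. Y x * Dn x)"
    by (rule Bochner_Integration.integrable_bound[where f="\<lambda>x. K * Y x"]) (use Yi bn in \<open>auto elim!: eventually_mono simp: abs_mult mult.commute intro!: mult_right_mono\<close>)
  have iA: "integrable M (\<lambda>x. indicator A x * G x)" if "G \<in> borel_measurable M" "AE x in M. norm (G x) \<le> K" "A \<in> sets M" for A and G :: "'a \<Rightarrow> real"
    by (rule finite_measure.integrable_const_bound[OF finite_measure_axioms, where B=K]) (use that K0 in \<open>auto elim!: eventually_mono split: split_indicator\<close>)
  let ?mp = "distr (density M (\<lambda>x. ennreal (Dp x))) borel Y"
  let ?mn = "distr (density M (\<lambda>x. ennreal (Dn x))) borel Y"
  have eq: "?mp = ?mn"
  proof (rule measure_eqI)
    fix A assume A: "A \<in> sets ?mp"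
    then have A[measurable]: "A \<in> sets borel" by simp
    let ?S = "Y -` A \<inter> space M"
    have S[measurable]: "?S \<in> sets M" by measurable
    have e: "emeasure (distr (density M (\<lambda>x. ennreal (G x))) borel Y) A = ennreal (\<integral>x. indicator ?S x * G x \<partial>M)"
      if [measurable]: "G \<in> borel_measurable M" and b: "AE x in M. norm (G x) \<le> K" and p: "\<And>x. G x \<ge> 0" for G :: "'a \<Rightarrow> real"
    proof -
      have "emeasure (distr (density M (\<lambda>x. ennreal (G x))) borel Y) A = emeasure (density M (\<lambda>x. ennreal (G x))) ?S"
        by (subst emeasure_distr) auto
      also have "\<dots> = (\<integral>\<^sup>+ x. ennreal (G x) * indicator ?S x \<partial>M)"
        by (rule emeasure_density) auto
      also have "\<dots> = (\<integral>\<^sup>+ x. ennreal (indicator ?S x * G x) \<partial>M)"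
        by (rule nn_integral_cong) (auto split: split_indicator)
      also have "\<dots> = ennreal (\<integral>x. indicator ?S x * G x \<partial>M)"
        by (rule nn_integral_eq_integral) (use iA[OF that(1) b S] p in auto)
      finally show ?thesis .
    qed
    have "(\<integral>x. indicator ?S x * Dp x \<partial>M) = (\<integral>x. indicator ?S x * Dn x \<partial>M)"
    proof -
      have "(\<integral>x. indicator ?S x * Dp x \<partial>M) - (\<integral>x. indicator ?S x * Dn x \<partial>M)
          = (\<integral>x. indicator ?S x * Dp x - indicator ?S x * Dn x \<partial>M)"
        using iA[OF _ bp S] iA[OF _ bn S] by simp
      also have "\<dots> = (\<integral>x. indicator ?S x * D x \<partial>M)"
        by (rule Bochner_Integration.integral_cong) (auto simp: Dp_def Dn_def max_def)
      also have "\<dots> = 0" using H[OF A] .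
      finally show ?thesis by simp
    qed
    then show "emeasure ?mp A = emeasure ?mn A"
      using e[of Dp] e[of Dn] bp bn by (simp add: Dp_def Dn_def)
  qed simp
  have "integral\<^sup>L ?mp (\<lambda>y. y) = integral\<^sup>L (density M (\<lambda>x. ennreal (Dp x))) Y"
    by (rule integral_distr) auto
  also have "\<dots> = (\<integral>x. Dp x *\<^sub>R Y x \<partial>M)"
    by (rule integral_density) (auto simp: Dp_def)
  finally have 1: "integral\<^sup>L ?mp (\<lambda>y. y) = (\<integral>x. Y x * Dp x \<partial>M)" by (simp add: mult.commute)
  have "integral\<^sup>L ?mn (\<lambda>y. y) = integral\<^sup>L (density M (\<lambda>x. ennreal (Dn x))) Y"
    by (rule integral_distr) auto
  also have "\<dots> = (\<integral>x. Dn x *\<^sub>R Y x \<partial>M)"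
    by (rule integral_density) (auto simp: Dn_def)
  finally have 2: "integral\<^sup>L ?mn (\<lambda>y. y) = (\<integral>x. Y x * Dn x \<partial>M)" by (simp add: mult.commute)
  have "(\<integral>x. Y x * Dp x \<partial>M) = (\<integral>x. Y x * Dn x \<partial>M)" using 1 2 eq by simp
  moreover have "(\<integral>x. Y x * D x \<partial>M) = (\<integral>x. Y x * Dp x - Y x * Dn x \<partial>M)"
    by (rule Bochner_Integration.integral_cong) (auto simp: Dp_def Dn_def max_def algebra_simps)
  ultimately show ?thesis using ip in' by simp
qed



lemma subalg_sigX:
  assumes "X \<in> measurable M N"
  shows "subalgebra M (sigX M N X)"
  unfolding subalgebra_def sigX_def
  using assms by (auto simp: sets_vimage_algebra2 measurable_space measurable_sets)

lemma sum_ind_strat: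
  "(\<Sum>v\<in>Ustr z u. indicator {\<omega>\<in>space M. stratum S1 S0 \<omega> = v} \<omega>) =
   (indicator {\<omega>\<in>space M. scomp z (stratum S1 S0 \<omega>) = scomp z u} \<omega> :: real)"
proof -
  have fin: "finite (Ustr z u)" by simp
  have "(\<Sum>v\<in>Ustr z u. indicator {\<omega>\<in>space M. stratum S1 S0 \<omega> = v} \<omega> :: real)
      = (\<Sum>v\<in>Ustr z u. if stratum S1 S0 \<omega> = v then indicator (space M) \<omega> else 0)"
    by (rule sum.cong) (auto split: split_indicator)
  also have "\<dots> = (if stratum S1 S0 \<omega> \<in> Ustr z u then indicator (space M) \<omega> else 0)"
    using fin by (simp add: sum.delta)
  finally show ?thesis by (auto simp: Ustr_def split: split_indicator)
qed



lemma core: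
  fixes M :: "'a measure" and N :: "'b measure" and X :: "'a \<Rightarrow> 'b"
    and S1 S0 :: "'a \<Rightarrow> bool" and Yz :: "'a \<Rightarrow> real"
  assumes P: "prob_space M" and Xm[measurable]: "X \<in> measurable M N"
    and S1m[measurable]: "S1 \<in> measurable M (count_space UNIV)"
    and S0m[measurable]: "S0 \<in> measurable M (count_space UNIV)"
    and Ym[measurable]: "Yz \<in> borel_measurable M" and Yi: "integrable M Yz"
    and CI: "cond_indep_var M borel Yz (count_space UNIV) (stratum S1 S0) N X"
    and pos: "AE \<omega> in M. (\<Sum>v\<in>Ustr z u. pscore M N X S1 S0 v \<omega>) > 0"
  shows "(\<integral>\<omega>. (pscore M N X S1 S0 u \<omega> / (\<Sum>v\<in>Ustr z u. pscore M N X S1 S0 v \<omega>)) * Yz \<omega>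
            * indicator {\<omega>\<in>space M. scomp z (stratum S1 S0 \<omega>) = scomp z u} \<omega> \<partial>M)
       = (\<integral>\<omega>. Yz \<omega> * indicator {\<omega>\<in>space M. stratum S1 S0 \<omega> = u} \<omega> \<partial>M)"
proof -
  interpret prob_space M by fact
  define F where "F = sigX M N X"
  have subF: "subalgebra M F" unfolding F_def by (rule subalg_sigX[OF Xm])
  interpret finite_measure_subalgebra M F by unfold_locales (rule subF)
  define A where "A v = {\<omega>\<in>space M. stratum S1 S0 \<omega> = v}" for v
  define B where "B = {\<omega>\<in>space M. scomp z (stratum S1 S0 \<omega>) = scomp z u}"
  define e where "e v = pscore M N X S1 S0 v" for v
  define Es where "Es \<omega> = (\<Sum>v\<in>Ustr z u. e v \<omega>)" for \<omega>
  define r where "r \<omega> = e u \<omega> / Es \<omega>" for \<omega>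
  have Am[measurable]: "A v \<in> sets M" for v
    unfolding A_def stratum_def by measurable
  have Bm[measurable]: "B \<in> sets M"
    unfolding B_def stratum_def scomp_def by measurable
  have e_def': "e v = real_cond_exp M F (indicator (A v))" for v
    unfolding e_def pscore_def cprobX_def A_def F_def ..
  have eF[measurable]: "e v \<in> borel_measurable F" for v
    unfolding e_def' by simp
  have EsF[measurable]: "Es \<in> borel_measurable F" unfolding Es_def by measurable
  have rF[measurable]: "r \<in> borel_measurable F" unfolding r_def by measurable
  have rM[measurable]: "r \<in> borel_measurable M" by (rule measurable_from_subalg[OF subF rF])
  have eM[measurable]: "e v \<in> borel_measurable M" for v by (rule measurable_from_subalg[OF subF eF])
  have EsM[measurable]: "Es \<in> borel_measurable M" by (rule measurable_from_subalg[OF subF EsF])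
  have epos: "AE \<omega> in M. \<forall>v. e v \<omega> \<ge> 0"
    unfolding AE_all_countable e_def'
    by (intro allI real_cond_exp_pos) auto
  have Espos: "AE \<omega> in M. Es \<omega> > 0" using pos unfolding Es_def e_def .
  have uin: "u \<in> Ustr z u" unfolding Ustr_def by simp
  have eleEs: "AE \<omega> in M. e u \<omega> \<le> Es \<omega>"
    using epos by eventually_elim (unfold Es_def, rule member_le_sum[OF uin], auto)
  have rb: "AE \<omega> in M. 0 \<le> r \<omega> \<and> r \<omega> \<le> 1"
    using epos Espos eleEs
  proof eventually_elim
    case (elim \<omega>)
    then have "0 \<le> e u \<omega>" by blast
    moreover have "0 \<le> e u \<omega> / Es \<omega>" using \<open>0 \<le> e u \<omega>\<close> elim(2) by simp
    moreover have "e u \<omega> / Es \<omega> \<le> 1" using elim(2,3) by simp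
    ultimately show ?case by (simp add: r_def)
  qed
  have rEs: "AE \<omega> in M. r \<omega> * Es \<omega> = e u \<omega>"
    using Espos by eventually_elim (auto simp: r_def)
  have EsB: "AE \<omega> in M. Es \<omega> = real_cond_exp M F (indicator B) \<omega>"
  proof -
    have "AE \<omega> in M. real_cond_exp M F (\<lambda>x. \<Sum>v\<in>Ustr z u. indicator (A v) x) \<omega>
             = (\<Sum>v\<in>Ustr z u. real_cond_exp M F (indicator (A v)) \<omega>)"
      by (rule real_cond_exp_sum, rule integrable_const_bound[where B=1]) (auto split: split_indicator)
    moreover have "(\<lambda>x. \<Sum>v\<in>Ustr z u. indicator (A v) x :: real) = indicator B"
      unfolding A_def B_def by (rule ext, rule sum_ind_strat)
    ultimately show ?thesis unfolding Es_def e_def' by (simp add: eq_commute)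
  qed
  have CIs: "AE \<omega> in M. real_cond_exp M F (\<lambda>t. indicator (Yz -` SA \<inter> space M) t * indicator C t) \<omega>
        = real_cond_exp M F (indicator (Yz -` SA \<inter> space M)) \<omega> * real_cond_exp M F (indicator C) \<omega>"
    if "SA \<in> sets borel" "C = stratum S1 S0 -` SB \<inter> space M" for SA SB C
    using CI that unfolding cond_indep_var_def F_def by auto
  have CIB: "AE \<omega> in M. real_cond_exp M F (\<lambda>t. indicator (Yz -` SA \<inter> space M) t * indicator B t) \<omega>
        = real_cond_exp M F (indicator (Yz -` SA \<inter> space M)) \<omega> * real_cond_exp M F (indicator B) \<omega>"
    if "SA \<in> sets borel" for SA
    by (rule CIs[OF that, of _ "{v. scomp z v = scomp z u}"]) (auto simp: B_def)
  have CIA: "AE \<omega> in M. real_cond_exp M F (\<lambda>t. indicator (Yz -` SA \<inter> space M) t * indicator (A u) t) \<omega>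
        = real_cond_exp M F (indicator (Yz -` SA \<inter> space M)) \<omega> * e u \<omega>"
    if "SA \<in> sets borel" for SA
    unfolding e_def' by (rule CIs[OF that, of _ "{u}"]) (auto simp: A_def)
  have rbnd: "AE \<omega> in M. norm (r \<omega>) \<le> 1" using rb by eventually_elim auto
  have int_rg: "integrable M (\<lambda>x. r x * g x)" if "g \<in> borel_measurable M" "\<And>x. \<bar>g x\<bar> \<le> 1" for g
  proof (rule integrable_const_bound[where B=1])
    show "AE x in M. norm (r x * g x) \<le> 1"
      using rb by eventually_elim (auto simp: abs_mult intro!: mult_le_one that(2))
  qed (use that in auto)
  have H: "(\<integral>\<omega>. indicator (Yz -` SA \<inter> space M) \<omega> * (r \<omega> * indicator B \<omega> - indicator (A u) \<omega>) \<partial>M) = 0"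
    if SA: "SA \<in> sets borel" for SA
  proof -
    define I :: "'a \<Rightarrow> real" where "I = indicator (Yz -` SA \<inter> space M)"
    have Im[measurable]: "I \<in> borel_measurable M" unfolding I_def using SA by measurable
    have i1: "integrable M (\<lambda>x. r x * (I x * indicator B x))"
      by (rule int_rg, measurable) (auto simp: I_def split: split_indicator)
    have i2: "integrable M (\<lambda>x. I x * indicator (A u) x)"
      by (rule integrable_const_bound[where B=1]) (use Im in \<open>auto simp: I_def[symmetric] split: split_indicator\<close>, auto simp: I_def split: split_indicator)
    have "(\<integral>x. r x * (I x * indicator B x) \<partial>M) = (\<integral>x. r x * real_cond_exp M F (\<lambda>t. I t * indicator B t) x \<partial>M)"
      by (rule real_cond_exp_intg(2)[symmetric]) (use i1 in auto)
    also have "\<dots> = (\<integral>x. real_cond_exp M F I x * e u x \<partial>M)"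
    proof (rule integral_cong_AE)
      show "AE x in M. r x * real_cond_exp M F (\<lambda>t. I t * indicator B t) x = real_cond_exp M F I x * e u x"
        using CIB[OF SA] EsB rEs unfolding I_def[symmetric] by eventually_elim (metis mult.assoc mult.commute)
    qed auto
    also have "\<dots> = (\<integral>x. real_cond_exp M F (\<lambda>t. I t * indicator (A u) t) x \<partial>M)"
    proof (rule integral_cong_AE)
      show "AE x in M. real_cond_exp M F I x * e u x = real_cond_exp M F (\<lambda>t. I t * indicator (A u) t) x"
        using CIA[OF SA] unfolding I_def[symmetric] by eventually_elim simp
    qed auto
    also have "\<dots> = (\<integral>x. I x * indicator (A u) x \<partial>M)"
      by (rule real_cond_exp_int(2)[OF i2])
    finally have eq: "(\<integral>x. r x * (I x * indicator B x) \<partial>M) = (\<integral>x. I x * indicator (A u) x \<partial>M)" .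
    have "(\<integral>\<omega>. I \<omega> * (r \<omega> * indicator B \<omega> - indicator (A u) \<omega>) \<partial>M)
        = (\<integral>x. r x * (I x * indicator B x) - I x * indicator (A u) x \<partial>M)"
      by (rule Bochner_Integration.integral_cong) (auto simp: algebra_simps)
    also have "\<dots> = 0" using i1 i2 eq by simp
    finally show ?thesis unfolding I_def .
  qed
  have D0: "(\<integral>\<omega>. Yz \<omega> * (r \<omega> * indicator B \<omega> - indicator (A u) \<omega>) \<partial>M) = 0"
  proof (rule ext_lemma[OF P Ym Yi _ _ _ H])
    show "AE x in M. \<bar>r x * indicator B x - indicator (A u) x\<bar> \<le> 2"
      using rb by eventually_elim (auto split: split_indicator)
  qed auto
  have j1: "integrable M (\<lambda>x. r x * Yz x * indicator B x)"
  proof (rule Bochner_Integration.integrable_bound[where f="\<lambda>x. Yz x"])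
    show "AE x in M. norm (r x * Yz x * indicator B x) \<le> norm (Yz x)"
      using rb by eventually_elim (auto simp: abs_mult split: split_indicator intro!: mult_left_le_one_le)
  qed (use Yi in auto)
  have j2: "integrable M (\<lambda>x. Yz x * indicator (A u) x)"
    by (rule integrable_real_mult_indicator[OF Am Yi])
  have "(\<integral>x. r x * Yz x * indicator B x \<partial>M) - (\<integral>x. Yz x * indicator (A u) x \<partial>M)
      = (\<integral>x. r x * Yz x * indicator B x - Yz x * indicator (A u) x \<partial>M)" using j1 j2 by simp
  also have "\<dots> = (\<integral>\<omega>. Yz \<omega> * (r \<omega> * indicator B \<omega> - indicator (A u) \<omega>) \<partial>M)"
    by (rule Bochner_Integration.integral_cong) (auto simp: algebra_simps)
  finally have "(\<integral>x. r x * Yz x * indicator B x \<partial>M) = (\<integral>x. Yz x * indicator (A u) x \<partial>M)" using D0 by simp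
  then show ?thesis unfolding r_def Es_def e_def A_def B_def .
qed



lemma indep_int:
  fixes M :: "'a measure" and NT :: "'c measure" and T :: "'a \<Rightarrow> 'c" and Z :: "'a \<Rightarrow> bool"
    and f :: "'a \<Rightarrow> real"
  assumes P: "prob_space M" and Zm[measurable]: "Z \<in> measurable M (count_space UNIV)"
    and Tm[measurable]: "T \<in> measurable M NT"
    and ind: "indep_rv M (count_space UNIV) Z NT T"
    and fG: "f \<in> borel_measurable (vimage_algebra (space M) T NT)" and fi: "integrable M f"
  shows "(\<integral>\<omega>. indicator (Z -` {b} \<inter> space M) \<omega> * f \<omega> \<partial>M)
         = measure M (Z -` {b} \<inter> space M) * (\<integral>\<omega>. f \<omega> \<partial>M)"
proof -
  interpret prob_space M by fact
  define G where "G = vimage_algebra (space M) T NT"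
  have subG: "subalgebra M G" unfolding G_def using subalg_sigX[OF Tm] by (simp add: sigX_def)
  interpret finite_measure_subalgebra M G by unfold_locales (rule subG)
  define E where "E = Z -` {b} \<inter> space M"
  have Em[measurable]: "E \<in> sets M" unfolding E_def by measurable
  have fG'[measurable]: "f \<in> borel_measurable G" using fG unfolding G_def .
  have fM[measurable]: "f \<in> borel_measurable M" by (rule measurable_from_subalg[OF subG fG'])
  have iE: "integrable M (indicator E :: 'a \<Rightarrow> real)"
    by (rule integrable_const_bound[where B=1]) (auto split: split_indicator)
  have ae: "AE x in M. real_cond_exp M G (indicator E) x = prob E"
  proof (rule real_cond_exp_charact)
    fix A assume A: "A \<in> sets G"
    then obtain S where S: "S \<in> sets NT" and AS: "A = T -` S \<inter> space M"
      unfolding G_def using Tm by (auto simp: sets_vimage_algebra2 measurable_space)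
    have Am: "A \<in> sets M" using A subG by (auto simp: subalgebra_def)
    have "prob (E \<inter> A) = prob E * prob A"
      using S AS by (intro indep_setD[OF ind[unfolded indep_rv_def]]) (auto simp: E_def intro!: exI[of _ S])
    then show "(\<integral>x\<in>A. indicator E x \<partial>M) = (\<integral>x\<in>A. prob E \<partial>M)"
      using Am Em by (simp add: set_lebesgue_integral_def indicator_inter_arith[symmetric] Int_commute mult.commute)
  qed (use iE in auto)
  have "(\<integral>\<omega>. indicator E \<omega> * f \<omega> \<partial>M) = (\<integral>\<omega>. f \<omega> * indicator E \<omega> \<partial>M)"
    by (simp add: mult.commute)
  also have "\<dots> = (\<integral>\<omega>. f \<omega> * real_cond_exp M G (indicator E) \<omega> \<partial>M)"
    by (rule real_cond_exp_intg(2)[symmetric]) (use integrable_real_mult_indicator[OF Em fi] in auto)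
  also have "\<dots> = (\<integral>\<omega>. f \<omega> * prob E \<partial>M)"
    by (rule integral_cong_AE) (use ae in \<open>auto elim!: eventually_mono\<close>)
  also have "\<dots> = prob E * (\<integral>\<omega>. f \<omega> \<partial>M)" by simp
  finally show ?thesis unfolding E_def .
qed



lemma half:
  fixes M :: "'a measure" and N :: "'b measure"
    and Z S1 S0 S :: "'a \<Rightarrow> bool" and Y1 Y0 Y Yz :: "'a \<Rightarrow> real" and X :: "'a \<Rightarrow> 'b"
    and u :: "bool \<times> bool" and z :: bool
  assumes S_def: "S = (\<lambda>\<omega>. if Z \<omega> then S1 \<omega> else S0 \<omega>)"
    and Y_def: "Y = (\<lambda>\<omega>. if Z \<omega> then Y1 \<omega> else Y0 \<omega>)"
    and Yz_def: "Yz = (if z then Y1 else Y0)"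
  assumes P: "prob_space M"
    and Zm[measurable]: "Z \<in> measurable M (count_space UNIV)"
    and S1m[measurable]: "S1 \<in> measurable M (count_space UNIV)"
    and S0m[measurable]: "S0 \<in> measurable M (count_space UNIV)"
    and Y1m[measurable]: "Y1 \<in> borel_measurable M" and Y0m[measurable]: "Y0 \<in> borel_measurable M"
    and Xm[measurable]: "X \<in> measurable M N"
    and ind: "indep_rv M (count_space UNIV) Z
           (count_space UNIV \<Otimes>\<^sub>M count_space UNIV \<Otimes>\<^sub>M borel \<Otimes>\<^sub>M borel \<Otimes>\<^sub>M N)
           (\<lambda>\<omega>. (S1 \<omega>, S0 \<omega>, Y1 \<omega>, Y0 \<omega>, X \<omega>))"
    and CI: "cond_indep_var M borel Yz (count_space UNIV) (stratum S1 S0) N X"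
    and Yi: "integrable M Yz"
    and wi: "integrable M (\<lambda>\<omega>. weight M N X S1 S0 z u \<omega> * Yz \<omega>)"
    and pu: "pprop M S1 S0 u > 0"
    and pE: "measure M {\<omega>\<in>space M. Z \<omega> = z \<and> S \<omega> = scomp z u} > 0"
    and pos: "AE \<omega> in M. (\<Sum>u'\<in>Ustr z u. pscore M N X S1 S0 u' \<omega>) > 0"
  shows "cond_expect_event M (\<lambda>\<omega>. weight M N X S1 S0 z u \<omega> * Y \<omega>) {\<omega>\<in>space M. Z \<omega> = z \<and> S \<omega> = scomp z u}
       = (\<integral>\<omega>. Yz \<omega> * indicator {\<omega>\<in>space M. stratum S1 S0 \<omega> = u} \<omega> \<partial>M) / pprop M S1 S0 u"
proof -
  interpret prob_space M by fact
  define T where "T = (\<lambda>\<omega>. (S1 \<omega>, S0 \<omega>, Y1 \<omega>, Y0 \<omega>, X \<omega>))"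
  define NT :: "(bool \<times> bool \<times> real \<times> real \<times> 'b) measure"
    where "NT = (count_space UNIV \<Otimes>\<^sub>M count_space UNIV \<Otimes>\<^sub>M borel \<Otimes>\<^sub>M borel \<Otimes>\<^sub>M N)"
  have Tm[measurable]: "T \<in> measurable M NT" unfolding T_def NT_def by measurable
  define G where "G = vimage_algebra (space M) T NT"
  have spG: "space G = space M" unfolding G_def by simp
  have TG[measurable]: "T \<in> measurable G NT"
    unfolding G_def by (rule measurable_vimage_algebra1) (use measurable_space[OF Tm] in auto)
  have TG'[measurable]: "T \<in> measurable G (count_space UNIV \<Otimes>\<^sub>M count_space UNIV \<Otimes>\<^sub>M borel \<Otimes>\<^sub>M borel \<Otimes>\<^sub>M N)"
    using TG unfolding NT_def .
  have XG[measurable]: "X \<in> measurable G N"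
  proof -
    have "(\<lambda>\<omega>. snd (snd (snd (snd (T \<omega>))))) \<in> measurable G N" by measurable
    then show ?thesis by (simp add: T_def)
  qed
  have S1G[measurable]: "S1 \<in> measurable G (count_space UNIV)"
  proof -
    have "(\<lambda>\<omega>. fst (T \<omega>)) \<in> measurable G (count_space UNIV)" by measurable
    then show ?thesis by (simp add: T_def)
  qed
  have S0G[measurable]: "S0 \<in> measurable G (count_space UNIV)"
  proof -
    have "(\<lambda>\<omega>. fst (snd (T \<omega>))) \<in> measurable G (count_space UNIV)" by measurable
    then show ?thesis by (simp add: T_def)
  qed
  have Y1G[measurable]: "Y1 \<in> borel_measurable G"
  proof -
    have "(\<lambda>\<omega>. fst (snd (snd (T \<omega>)))) \<in> borel_measurable G" by measurable
    then show ?thesis by (simp add: T_def)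
  qed
  have Y0G[measurable]: "Y0 \<in> borel_measurable G"
  proof -
    have "(\<lambda>\<omega>. fst (snd (snd (snd (T \<omega>))))) \<in> borel_measurable G" by measurable
    then show ?thesis by (simp add: T_def)
  qed
  have YzG[measurable]: "Yz \<in> borel_measurable G" unfolding Yz_def by (cases z) simp_all
  have YzM[measurable]: "Yz \<in> borel_measurable M" unfolding Yz_def by (cases z) simp_all
  have subXG: "subalgebra G (sigX M N X)"
    using subalg_sigX[OF XG] by (simp add: sigX_def spG)
  have psG[measurable]: "pscore M N X S1 S0 v \<in> borel_measurable G" for v
    by (rule measurable_from_subalg[OF subXG]) (simp add: pscore_def cprobX_def)
  have wG[measurable]: "weight M N X S1 S0 z u \<in> borel_measurable G"
    unfolding weight_def by measurable
  define B where "B = {\<omega>\<in>space M. scomp z (stratum S1 S0 \<omega>) = scomp z u}"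
  define Au where "Au = {\<omega>\<in>space M. stratum S1 S0 \<omega> = u}"
  define E where "E = {\<omega>\<in>space M. Z \<omega> = z \<and> S \<omega> = scomp z u}"
  define Zz where "Zz = Z -` {z} \<inter> space M"
  have BG[measurable]: "B \<in> sets G"
  proof -
    have "B = {\<omega>\<in>space G. (if z then S1 \<omega> else S0 \<omega>) = scomp z u}"
      unfolding B_def spG by (auto simp: scomp_def stratum_def)
    also have "\<dots> \<in> sets G" by (cases z) simp_all
    finally show ?thesis .
  qed
  have subGM: "subalgebra M G" unfolding G_def using subalg_sigX[OF Tm] by (simp add: sigX_def)
  have BM[measurable]: "B \<in> sets M" using BG subGM by (auto simp: subalgebra_def)
  have AuM[measurable]: "Au \<in> sets M" unfolding Au_def stratum_def by measurable
  define f where "f \<omega> = weight M N X S1 S0 z u \<omega> * Yz \<omega> * indicator B \<omega>" for \<omega>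
  have fG: "f \<in> borel_measurable G" unfolding f_def by measurable
  have fi: "integrable M f" unfolding f_def by (rule integrable_real_mult_indicator[OF BM wi])
  have iB: "integrable M (indicator B :: 'a \<Rightarrow> real)"
    by (rule integrable_const_bound[where B=1]) (auto split: split_indicator)
  have 1: "(\<integral>\<omega>. indicator Zz \<omega> * f \<omega> \<partial>M) = prob Zz * (\<integral>\<omega>. f \<omega> \<partial>M)"
    unfolding Zz_def by (rule indep_int[OF P Zm _ ind[folded T_def NT_def]]) (use fG fi in \<open>auto simp: G_def T_def NT_def\<close>)
  have 2: "(\<integral>\<omega>. indicator Zz \<omega> * indicator B \<omega> \<partial>M) = prob Zz * (\<integral>\<omega>. indicator B \<omega> \<partial>M)"
    unfolding Zz_def by (rule indep_int[OF P Zm _ ind[folded T_def NT_def]]) (use iB borel_measurable_indicator[OF BG] in \<open>auto simp: G_def T_def NT_def\<close>)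
  have ptw: "\<omega> \<in> space M \<Longrightarrow> indicator E \<omega> = indicator Zz \<omega> * (indicator B \<omega> :: real)" for \<omega>
    by (cases z) (auto simp: E_def Zz_def B_def S_def scomp_def stratum_def split: split_indicator)
  have mE: "measure M E = prob Zz * prob B"
  proof -
    have "measure M E = (\<integral>\<omega>. indicator E \<omega> \<partial>M)" using E_def by (simp add: Int_absorb2 subsetI)
    also have "\<dots> = (\<integral>\<omega>. indicator Zz \<omega> * indicator B \<omega> \<partial>M)"
      by (rule Bochner_Integration.integral_cong) (auto simp: ptw)
    finally show ?thesis using 2 BM by simp
  qed
  have num: "(\<integral>\<omega>. weight M N X S1 S0 z u \<omega> * Y \<omega> * indicator E \<omega> \<partial>M) = prob Zz * (\<integral>\<omega>. f \<omega> \<partial>M)"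
  proof -
    have "(\<integral>\<omega>. weight M N X S1 S0 z u \<omega> * Y \<omega> * indicator E \<omega> \<partial>M) = (\<integral>\<omega>. indicator Zz \<omega> * f \<omega> \<partial>M)"
      by (rule Bochner_Integration.integral_cong)
         (auto simp: f_def ptw Y_def Yz_def Zz_def split: split_indicator)
    then show ?thesis using 1 by simp
  qed
  have Z0: "prob Zz \<noteq> 0" using pE mE unfolding E_def by auto
  have B0: "prob B \<noteq> 0" using pE mE unfolding E_def by auto
  define r where "r \<omega> = pscore M N X S1 S0 u \<omega> / (\<Sum>v\<in>Ustr z u. pscore M N X S1 S0 v \<omega>)" for \<omega>
  have sumpi: "(\<Sum>v\<in>Ustr z u. pprop M S1 S0 v) = prob B"
  proof -
    have "(\<Sum>v\<in>Ustr z u. pprop M S1 S0 v) = (\<Sum>v\<in>Ustr z u. \<integral>\<omega>. indicator {\<omega>\<in>space M. stratum S1 S0 \<omega> = v} \<omega> \<partial>M)"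
      by (simp add: pprop_def Int_absorb2 subsetI)
    also have "\<dots> = (\<integral>\<omega>. (\<Sum>v\<in>Ustr z u. indicator {\<omega>\<in>space M. stratum S1 S0 \<omega> = v} \<omega>) \<partial>M)"
      by (rule Bochner_Integration.integral_sum[symmetric], rule integrable_const_bound[where B=1])
         (auto split: split_indicator simp: stratum_def)
    also have "\<dots> = (\<integral>\<omega>. indicator B \<omega> \<partial>M)" unfolding B_def sum_ind_strat ..
    finally show ?thesis using BM by (simp add: B_def Int_absorb2 subsetI)
  qed
  have wr: "weight M N X S1 S0 z u \<omega> = r \<omega> * (prob B / pprop M S1 S0 u)" for \<omega>
    unfolding weight_def r_def sumpi by simp
  have core': "(\<integral>\<omega>. r \<omega> * Yz \<omega> * indicator B \<omega> \<partial>M) = (\<integral>\<omega>. Yz \<omega> * indicator Au \<omega> \<partial>M)"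
    unfolding r_def B_def Au_def by (rule core[OF P Xm S1m S0m YzM Yi CI pos])
  have "(\<integral>\<omega>. f \<omega> \<partial>M) = (\<integral>\<omega>. (prob B / pprop M S1 S0 u) * (r \<omega> * Yz \<omega> * indicator B \<omega>) \<partial>M)"
    by (rule Bochner_Integration.integral_cong) (auto simp: f_def wr)
  also have "\<dots> = (prob B / pprop M S1 S0 u) * (\<integral>\<omega>. Yz \<omega> * indicator Au \<omega> \<partial>M)"
    by (simp add: core')
  finally have fint: "(\<integral>\<omega>. f \<omega> \<partial>M) = (prob B / pprop M S1 S0 u) * (\<integral>\<omega>. Yz \<omega> * indicator Au \<omega> \<partial>M)" .
  show ?thesis
    unfolding cond_expect_event_def E_def[symmetric] Au_def[symmetric]
    using num mE fint Z0 B0 by (simp add: field_simps)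
qed


theorem proposition6:
  fixes M :: "'a measure" and N :: "'b measure"
    and Z S1 S0 :: "'a \<Rightarrow> bool" and Y1 Y0 :: "'a \<Rightarrow> real" and X :: "'a \<Rightarrow> 'b"
    and u :: "bool \<times> bool"
  defines "S \<equiv> (\<lambda>\<omega>. if Z \<omega> then S1 \<omega> else S0 \<omega>)"
    and "Y \<equiv> (\<lambda>\<omega>. if Z \<omega> then Y1 \<omega> else Y0 \<omega>)"
  assumes "prob_space M"
    and "Z \<in> measurable M (count_space UNIV)"
    and "S1 \<in> measurable M (count_space UNIV)"
    and "S0 \<in> measurable M (count_space UNIV)"
    and "Y1 \<in> borel_measurable M" and "Y0 \<in> borel_measurable M"
    and "X \<in> measurable M N"
    \<comment> \<open>Randomization\<close>
    and "indep_rv M (count_space UNIV) Z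
           (count_space UNIV \<Otimes>\<^sub>M count_space UNIV \<Otimes>\<^sub>M borel \<Otimes>\<^sub>M borel \<Otimes>\<^sub>M N)
           (\<lambda>\<omega>. (S1 \<omega>, S0 \<omega>, Y1 \<omega>, Y0 \<omega>, X \<omega>))"
    \<comment> \<open>General principal ignorability\<close>
    and "cond_indep_var M borel Y1 (count_space UNIV) (stratum S1 S0) N X"
    and "cond_indep_var M borel Y0 (count_space UNIV) (stratum S1 S0) N X"
    \<comment> \<open>xi = Pr(U = s-bar s | X) / Pr(U = s s-bar | X) is a fixed constant\<close>
    and "AE \<omega> in M. pscore M N X S1 S0 (True, False) \<omega> > 0"
    and "\<exists>\<xi>::real. AE \<omega> in M.
           pscore M N X S1 S0 (False, True) \<omega> / pscore M N X S1 S0 (True, False) \<omega> = \<xi>"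
    \<comment> \<open>existence of expectations\<close>
    and "integrable M Y1" and "integrable M Y0"
    and "integrable M (\<lambda>\<omega>. weight M N X S1 S0 True u \<omega> * Y1 \<omega>)"
    and "integrable M (\<lambda>\<omega>. weight M N X S1 S0 False u \<omega> * Y0 \<omega>)"
    \<comment> \<open>positive conditioning events and denominators\<close>
    and "pprop M S1 S0 u > 0"
    and "measure M {\<omega>\<in>space M. Z \<omega> \<and> S \<omega> = fst u} > 0"
    and "measure M {\<omega>\<in>space M. \<not> Z \<omega> \<and> S \<omega> = snd u} > 0"
    and "AE \<omega> in M. (\<Sum>u'\<in>Ustr True u. pscore M N X S1 S0 u' \<omega>) > 0"
    and "AE \<omega> in M. (\<Sum>u'\<in>Ustr False u. pscore M N X S1 S0 u' \<omega>) > 0"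
  shows "ACE M S1 S0 Y1 Y0 u =
           cond_expect_event M (\<lambda>\<omega>. weight M N X S1 S0 True u \<omega> * Y \<omega>)
             {\<omega>\<in>space M. Z \<omega> \<and> S \<omega> = fst u}
         - cond_expect_event M (\<lambda>\<omega>. weight M N X S1 S0 False u \<omega> * Y \<omega>)
             {\<omega>\<in>space M. \<not> Z \<omega> \<and> S \<omega> = snd u}"
proof -
  interpret prob_space M by fact
  have h1: "cond_expect_event M (\<lambda>\<omega>. weight M N X S1 S0 True u \<omega> * Y \<omega>) {\<omega>\<in>space M. Z \<omega> = True \<and> S \<omega> = scomp True u}
       = (\<integral>\<omega>. Y1 \<omega> * indicator {\<omega>\<in>space M. stratum S1 S0 \<omega> = u} \<omega> \<partial>M) / pprop M S1 S0 u"
    by (rule half[OF meta_eq_to_obj_eq[OF S_def] meta_eq_to_obj_eq[OF Y_def] _ assms(3-10) assms(11)])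
       (use assms(15,17,19,20,22) in \<open>auto simp: scomp_def\<close>)
  have h0: "cond_expect_event M (\<lambda>\<omega>. weight M N X S1 S0 False u \<omega> * Y \<omega>) {\<omega>\<in>space M. Z \<omega> = False \<and> S \<omega> = scomp False u}
       = (\<integral>\<omega>. Y0 \<omega> * indicator {\<omega>\<in>space M. stratum S1 S0 \<omega> = u} \<omega> \<partial>M) / pprop M S1 S0 u"
    by (rule half[OF meta_eq_to_obj_eq[OF S_def] meta_eq_to_obj_eq[OF Y_def] _ assms(3-10) assms(12)])
       (use assms(16,18,19,21,23) in \<open>auto simp: scomp_def\<close>)
  have Au[measurable]: "{\<omega>\<in>space M. stratum S1 S0 \<omega> = u} \<in> sets M"
    using assms(5,6) unfolding stratum_def by measurable
  have i1: "integrable M (\<lambda>\<omega>. Y1 \<omega> * indicator {\<omega>\<in>space M. stratum S1 S0 \<omega> = u} \<omega>)"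
    by (rule integrable_real_mult_indicator[OF Au assms(15)])
  have i0: "integrable M (\<lambda>\<omega>. Y0 \<omega> * indicator {\<omega>\<in>space M. stratum S1 S0 \<omega> = u} \<omega>)"
    by (rule integrable_real_mult_indicator[OF Au assms(16)])
  have "ACE M S1 S0 Y1 Y0 u = (\<integral>\<omega>. Y1 \<omega> * indicator {\<omega>\<in>space M. stratum S1 S0 \<omega> = u} \<omega>
         - Y0 \<omega> * indicator {\<omega>\<in>space M. stratum S1 S0 \<omega> = u} \<omega> \<partial>M) / pprop M S1 S0 u"
    unfolding ACE_def cond_expect_event_def pprop_def by (simp add: left_diff_distrib)
  also have "\<dots> = (\<integral>\<omega>. Y1 \<omega> * indicator {\<omega>\<in>space M. stratum S1 S0 \<omega> = u} \<omega> \<partial>M) / pprop M S1 S0 u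
       - (\<integral>\<omega>. Y0 \<omega> * indicator {\<omega>\<in>space M. stratum S1 S0 \<omega> = u} \<omega> \<partial>M) / pprop M S1 S0 u"
    using i1 i0 by (simp add: diff_divide_distrib)
  finally show ?thesis using h1 h0 by (simp add: scomp_def)
qed

end
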